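(* Let $\phi:[0,\infty)\to\mathbb R$ be convex, differentiable and bounded below, with $\phi'(0)<0$, and let $c_{II}\in(0,1)$ and $\rho_0>0$. Consider the following interval-based bisection line search: set $\rho_L=0$, $\rho_U=\infty$, and for $i=0,1,2,\dots$: if $|\phi'(\rho_i)|\le -c_{II}\phi'(0)$, stop and output $\rho^*=\rho_i$; otherwise, if $\phi'(\rho_i)>0$ set $\rho_U=\rho_i$, and if $\phi'(\rho_i)<0$ set $\rho_L=\rho_i$; then set $\rho_{i+1}=2\rho_L$ if $\rho_U=\infty$, and $\rho_{i+1}=\frac12(\rho_L+\rho_U)$ otherwise. Then this procedure stops after finitely many iterations, and its output $\rho^*$ satisfies the strong Wolfe condition $|\phi'(\rho^* )|\le -c_{II}\phi'(0)$.
   Context: In the application, $\phi(\rho)=\mathcal F(h_t+\rho z_t)$ for a convex differentiable objective $\mathcal F$ and a descent direction $z_t$, but the statement concerns an arbitrary $\phi$ as described. *)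

theory Defs
  imports "HOL-Analysis.Analysis"
begin

text \<open>State of the bisection line search: (rho_L, rho_U, rho_i), where
  rho_U = None encodes rho_U = infinity. The function d is the derivative phi'.\<close>

definition ls_step :: "(real \<Rightarrow> real) \<Rightarrow> real \<times> real option \<times> real \<Rightarrow> real \<times> real option \<times> real" where
  "ls_step d s = (case s of (rL, rU, r) \<Rightarrow>
     (let rU' = (if d r > 0 then Some r else rU);
          rL' = (if d r < 0 then r else rL)
      in (rL', rU', (case rU' of None \<Rightarrow> 2 * rL' | Some u \<Rightarrow> (rL' + u) / 2))))"

definition ls_state :: "(real \<Rightarrow> real) \<Rightarrow> real \<Rightarrow> nat \<Rightarrow> real \<times> real option \<times> real" where
  "ls_state d rho0 i = (ls_step d ^^ i) (0, None, rho0)"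

definition ls_rho :: "(real \<Rightarrow> real) \<Rightarrow> real \<Rightarrow> nat \<Rightarrow> real" where
  "ls_rho d rho0 i = snd (snd (ls_state d rho0 i))"

definition ls_stop :: "(real \<Rightarrow> real) \<Rightarrow> real \<Rightarrow> real \<Rightarrow> nat \<Rightarrow> bool" where
  "ls_stop d c rho0 i \<longleftrightarrow> \<bar>d (ls_rho d rho0 i)\<bar> \<le> - c * d 0"

end

theory Submission
  imports Defs
begin

lemma tangent_ineq:
  fixes \<phi> \<phi>' :: "real \<Rightarrow> real"
  assumes conv: "convex_on {0..} \<phi>"
    and deriv: "\<And>x. x \<ge> 0 \<Longrightarrow> (\<phi> has_real_derivative \<phi>' x) (at x within {0..})"
    and x: "x > 0" and y: "y \<ge> 0"
  shows "\<phi> y - \<phi> x \<ge> \<phi>' x * (y - x)"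
proof (rule convex_on_imp_above_tangent[OF conv])
  show "connected {0::real..}" by (simp add: is_interval_connected)
  show "x \<in> interior {0::real..}" using x by simp
  show "y \<in> {0..}" using y by simp
  show "(\<phi> has_real_derivative \<phi>' x) (at x within {0..})" using deriv x by simp
qed

lemma deriv_cont:
  fixes \<phi> \<phi>' :: "real \<Rightarrow> real"
  assumes conv: "convex_on {0..} \<phi>"
    and deriv: "\<And>x. x \<ge> 0 \<Longrightarrow> (\<phi> has_real_derivative \<phi>' x) (at x within {0..})"
  shows "continuous_on {0..} \<phi>'"
  unfolding continuous_on_iff
proof (intro ballI allI impI)
  fix p e :: real
  assume p: "p \<in> {0..}" and e: "e > 0"
  have p0: "0 \<le> p" using p by simp
  define D where "D t = (\<phi> t - \<phi> p) / (t - p)" for t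
  have "(D \<longlongrightarrow> \<phi>' p) (at p within {0..})"
    using deriv[of p] p unfolding has_field_derivative_iff D_def by simp
  moreover have e3: "e/3 > 0" using e by simp
  ultimately obtain d where d: "d > 0"
    and dD0: "\<forall>t\<in>{0..}. 0 < dist t p \<and> dist t p < d \<longrightarrow> dist (D t) (\<phi>' p) < e/3"
    unfolding Lim_within by blast
  have dD: "\<And>t. t \<in> {0..} \<Longrightarrow> 0 < dist t p \<Longrightarrow> dist t p < d \<Longrightarrow> dist (D t) (\<phi>' p) < e/3"
    using dD0 by blast
  define d' where "d' = (if p > 0 then min (d/2) (p/2) else d/2)"
  have "d' > 0" using d p by (auto simp: d'_def)
  moreover have "\<forall>x\<in>{0..}. dist x p < d' \<longrightarrow> dist (\<phi>' x) (\<phi>' p) < e"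
  proof (intro ballI impI)
    fix x assume x: "x \<in> {0..}" and xd: "dist x p < d'"
    define t where "t = 2 * x - p"
    show "dist (\<phi>' x) (\<phi>' p) < e"
    proof (cases x p rule: linorder_cases)
      case equal then show ?thesis using e by simp
    next
      case greater
      have x0: "x > 0" using greater p by simp
      have t0: "t \<ge> 0" using greater p by (simp add: t_def)
      have d1: "dist (D x) (\<phi>' p) < e/3"
        using dD[of x] x greater xd d by (auto simp: dist_real_def d'_def split: if_splits)
      have d2: "dist (D t) (\<phi>' p) < e/3"
        using dD[of t] t0 greater xd d by (auto simp: dist_real_def d'_def t_def split: if_splits)
      have i1: "\<phi> t - \<phi> x \<ge> \<phi>' x * (t - x)" by (rule tangent_ineq[OF conv deriv x0 t0])
      have i2: "\<phi> p - \<phi> x \<ge> \<phi>' x * (p - x)" using tangent_ineq[OF conv deriv x0 p0] .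
      have ex: "\<phi> x = \<phi> p + D x * (x - p)" using greater by (simp add: D_def)
      have et: "\<phi> t = \<phi> p + D t * (2 * (x - p))" using greater by (simp add: D_def t_def)
      have "\<phi>' x * (x - p) \<le> (2 * D t - D x) * (x - p)"
        using i1 ex et by (simp add: t_def algebra_simps)
      hence u: "\<phi>' x \<le> 2 * D t - D x" using greater by simp
      have "D x * (x - p) \<le> \<phi>' x * (x - p)"
        using i2 ex by (simp add: algebra_simps)
      hence l: "D x \<le> \<phi>' x" using greater by simp
      show ?thesis using u l d1 d2 unfolding dist_real_def abs_less_iff by linarith
    next
      case less
      have pp: "p > 0" using less x by simp
      have x0: "x > 0" using less xd pp by (auto simp: dist_real_def d'_def)
      have t0: "t \<ge> 0" using less xd pp by (auto simp: dist_real_def d'_def t_def)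
      have d1: "dist (D x) (\<phi>' p) < e/3"
        using dD[of x] x less xd d by (auto simp: dist_real_def d'_def split: if_splits)
      have d2: "dist (D t) (\<phi>' p) < e/3"
        using dD[of t] t0 less xd d by (auto simp: dist_real_def d'_def t_def split: if_splits)
      have i1: "\<phi> t - \<phi> x \<ge> \<phi>' x * (t - x)" by (rule tangent_ineq[OF conv deriv x0 t0])
      have i2: "\<phi> p - \<phi> x \<ge> \<phi>' x * (p - x)" using tangent_ineq[OF conv deriv x0 p0] .
      have ex: "\<phi> x = \<phi> p + D x * (x - p)" using less by (simp add: D_def)
      have et: "\<phi> t = \<phi> p + D t * (2 * (x - p))" using less by (simp add: D_def t_def)
      have "\<phi>' x * (p - x) \<ge> (2 * D t - D x) * (p - x)"
        using i1 ex et by (simp add: t_def algebra_simps)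
      hence l: "\<phi>' x \<ge> 2 * D t - D x" using less by simp
      have "D x * (p - x) \<ge> \<phi>' x * (p - x)"
        using i2 ex by (simp add: algebra_simps)
      hence u: "D x \<ge> \<phi>' x" using less by simp
      show ?thesis using u l d1 d2 unfolding dist_real_def abs_less_iff by linarith
    qed
  qed
  ultimately show "\<exists>\<delta>>0. \<forall>x'\<in>{0..}. dist x' p < \<delta> \<longrightarrow> dist (\<phi>' x') (\<phi>' p) < e"
    by blast
qed

theorem theorem4:
  fixes \<phi> \<phi>' :: "real \<Rightarrow> real" and c rho0 :: real
  assumes conv: "convex_on {0..} \<phi>"
    and deriv: "\<And>x. x \<ge> 0 \<Longrightarrow> (\<phi> has_real_derivative \<phi>' x) (at x within {0..})"
    and bdd: "bdd_below (\<phi> ` {0..})"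
    and neg: "\<phi>' 0 < 0"
    and c: "0 < c" "c < 1"
    and rho0: "rho0 > 0"
  shows "\<exists>n. (\<forall>i<n. \<not> ls_stop \<phi>' c rho0 i) \<and> ls_stop \<phi>' c rho0 n
             \<and> \<bar>\<phi>' (ls_rho \<phi>' rho0 n)\<bar> \<le> - c * \<phi>' 0"
proof -
  define eps where "eps = - c * \<phi>' 0"
  have eps: "eps > 0" using c neg mult_pos_neg[of c "\<phi>' 0"] by (simp add: eps_def)
  have n0: "\<phi>' 0 < - eps" using c neg mult_pos_neg[of "1-c" "\<phi>' 0"] by (simp add: eps_def algebra_simps)
  define S where "S k = ls_state \<phi>' rho0 k" for k
  define L where "L k = fst (S k)" for k
  define U where "U k = fst (snd (S k))" for k
  define r where "r k = snd (snd (S k))" for k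
  have rr: "ls_rho \<phi>' rho0 k = r k" for k by (simp add: ls_rho_def r_def S_def)
  have stop_iff: "ls_stop \<phi>' c rho0 n \<longleftrightarrow> \<bar>\<phi>' (r n)\<bar> \<le> eps" for n
    by (simp add: ls_stop_def eps_def rr)
  have S_Suc: "S (Suc k) = ls_step \<phi>' (S k)" for k by (simp add: S_def ls_state_def)
  have S0: "S 0 = (0, None, rho0)" by (simp add: S_def ls_state_def)
  have step_pos: "L (Suc k) = L k \<and> U (Suc k) = Some (r k) \<and> r (Suc k) = (L k + r k) / 2"
    if "\<phi>' (r k) > 0" for k
  proof -
    obtain a b q where abq: "S k = (a, b, q)" by (cases "S k") auto
    show ?thesis using that by (simp add: S_Suc abq ls_step_def L_def U_def r_def Let_def)
  qed
  have step_neg: "L (Suc k) = r k \<and> U (Suc k) = U k \<and>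
      r (Suc k) = (case U k of None \<Rightarrow> 2 * r k | Some u \<Rightarrow> (r k + u) / 2)"
    if "\<phi>' (r k) < 0" for k
  proof -
    obtain a b q where abq: "S k = (a, b, q)" by (cases "S k") auto
    show ?thesis using that by (simp add: S_Suc abq ls_step_def L_def U_def r_def Let_def split: option.split)
  qed
  have ex: "\<exists>n. ls_stop \<phi>' c rho0 n"
  proof (rule ccontr)
    assume "\<not> ?thesis"
    hence nonstop: "\<phi>' (r k) > eps \<or> \<phi>' (r k) < - eps" for k
    proof -
      have "\<not> \<bar>\<phi>' (r k)\<bar> \<le> eps" using \<open>\<not> (\<exists>n. ls_stop \<phi>' c rho0 n)\<close> stop_iff by blast
      thus ?thesis by linarith
    qed
    have inv: "L k \<ge> 0 \<and> \<phi>' (L k) < - eps \<and> L k < r k \<and>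
        (\<forall>u. U k = Some u \<longrightarrow> \<phi>' u > eps \<and> L k < u \<and> r k = (L k + u) / 2)" for k
    proof (induction k)
      case 0
      then show ?case using S0 n0 rho0 by (simp add: L_def U_def r_def)
    next
      case (Suc k)
      from nonstop[of k] show ?case
      proof
        assume pos: "\<phi>' (r k) > eps"
        hence "\<phi>' (r k) > 0" using eps by simp
        from step_pos[OF this] Suc pos show ?case by auto
      next
        assume ng: "\<phi>' (r k) < - eps"
        hence "\<phi>' (r k) < 0" using eps by simp
        from step_neg[OF this] have e1: "L (Suc k) = r k" and e2: "U (Suc k) = U k"
          and e3: "r (Suc k) = (case U k of None \<Rightarrow> 2 * r k | Some u \<Rightarrow> (r k + u) / 2)" by auto
        have r0: "r k > 0" using Suc by linarith
        show ?case
        proof (cases "U k")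
          case None
          show ?thesis unfolding e1 e2 e3 using None r0 ng by simp
        next
          case (Some u)
          have h: "\<phi>' u > eps" "L k < u" "r k = (L k + u) / 2" using Suc Some by auto
          have h3: "2 * r k = L k + u" using h(3) by simp
          have h2: "r k < u" using h(2) h3 by linarith
          show ?thesis unfolding e1 e2 e3 using Some r0 ng h(1) h2 by simp
        qed
      qed
    qed
    have "\<exists>k. U k \<noteq> None"
    proof (rule ccontr)
      assume "\<not> ?thesis"
      hence none: "U k = None" for k by simp
      have negall: "\<phi>' (r k) < - eps" for k
      proof -
        have "\<not> \<phi>' (r k) > eps"
        proof
          assume "\<phi>' (r k) > eps"
          hence "\<phi>' (r k) > 0" using eps by simp
          from step_pos[OF this] none[of "Suc k"] show False by simp
        qed
        thus ?thesis using nonstop[of k] by simp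
      qed
      have rk: "r k = 2 ^ k * rho0" for k
      proof (induction k)
        case 0 then show ?case using S0 by (simp add: r_def)
      next
        case (Suc k)
        have "\<phi>' (r k) < 0" using negall[of k] eps by simp
        from step_neg[OF this] none[of k] Suc show ?case by simp
      qed
      obtain B where B: "\<And>x. x \<ge> 0 \<Longrightarrow> B \<le> \<phi> x"
        using bdd unfolding bdd_below_def by auto
      have bound: "B \<le> \<phi> 0 - eps * (2 ^ k * rho0)" for k
      proof -
        have rpos: "r k > 0" using rk rho0 by simp
        have "\<phi> 0 - \<phi> (r k) \<ge> \<phi>' (r k) * (0 - r k)"
          using tangent_ineq[OF conv deriv rpos, of 0] by simp
        moreover have "\<phi>' (r k) * r k \<le> - eps * r k"
          using negall[of k] rpos by (intro mult_right_mono) auto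
        ultimately have "\<phi> (r k) \<le> \<phi> 0 - eps * r k" by simp
        thus ?thesis using B[of "r k"] rpos rk[of k] by simp
      qed
      obtain k where k: "(\<phi> 0 - B) / (eps * rho0) < 2 ^ k"
        using real_arch_pow[of 2] by auto
      have "\<phi> 0 - B < 2 ^ k * (eps * rho0)"
        using k eps rho0 by (simp add: pos_divide_less_eq)
      thus False using bound[of k] by (simp add: algebra_simps)
    qed
    then obtain k0 where k0: "U k0 \<noteq> None" by blast
    define a where "a n = L (k0 + n)" for n
    define b where "b n = the (U (k0 + n))" for n
    have Uk: "U (k0 + n) = Some (b n)" for n
    proof -
      have "U (k0 + n) \<noteq> None"
      proof (induction n)
        case 0 then show ?case using k0 by simp
      next
        case (Suc n)
        from nonstop[of "k0 + n"] show ?case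
        proof
          assume "\<phi>' (r (k0 + n)) > eps"
          hence "\<phi>' (r (k0 + n)) > 0" using eps by simp
          from step_pos[OF this] show ?case by simp
        next
          assume "\<phi>' (r (k0 + n)) < - eps"
          hence "\<phi>' (r (k0 + n)) < 0" using eps by simp
          from step_neg[OF this] Suc show ?case by simp
        qed
      qed
      thus ?thesis by (simp add: b_def)
    qed
    have props: "a n \<ge> 0 \<and> \<phi>' (a n) < - eps \<and> \<phi>' (b n) > eps \<and> a n < b n \<and>
        r (k0 + n) = (a n + b n) / 2" for n
      using inv[of "k0 + n"] Uk[of n] by (simp add: a_def)
    have stepab: "a n \<le> a (Suc n) \<and> b (Suc n) \<le> b n \<and> b (Suc n) - a (Suc n) = (b n - a n) / 2" for n
    proof -
      have P: "a n < b n" "r (k0 + n) = (a n + b n) / 2" using props[of n] by auto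
      from nonstop[of "k0 + n"] show ?thesis
      proof
        assume "\<phi>' (r (k0 + n)) > eps"
        hence "\<phi>' (r (k0 + n)) > 0" using eps by simp
        from step_pos[OF this] Uk[of "Suc n"] P show ?thesis by (simp add: a_def)
      next
        assume "\<phi>' (r (k0 + n)) < - eps"
        hence "\<phi>' (r (k0 + n)) < 0" using eps by simp
        from step_neg[OF this] Uk[of "Suc n"] Uk[of n] P show ?thesis by (simp add: a_def)
      qed
    qed
    have width: "b n - a n = (b 0 - a 0) / 2 ^ n" for n
    proof (induction n)
      case 0 then show ?case by simp
    next
      case (Suc n) then show ?case using stepab[of n] by simp
    qed
    have inca: "incseq a" using stepab by (intro incseq_SucI) auto
    have decb: "decseq b" using stepab by (intro decseq_SucI) auto
    have "a n \<le> b 0" for n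
      using props[of n] decb unfolding decseq_def by (metis less_imp_le order.trans zero_le)
    hence bdda: "bdd_above (range a)" unfolding bdd_above_def by blast
    define p where "p = (SUP i. a i)"
    have ap: "a \<longlonglongrightarrow> p" unfolding p_def by (rule LIMSEQ_incseq_SUP[OF bdda inca])
    have "(\<lambda>n. a n + (b 0 - a 0) / 2 ^ n) \<longlonglongrightarrow> p + 0"
      by (intro tendsto_add ap LIMSEQ_divide_realpow_zero) simp
    moreover have "(\<lambda>n. a n + (b 0 - a 0) / 2 ^ n) = b"
    proof (rule ext)
      fix n show "a n + (b 0 - a 0) / 2 ^ n = b n" using width[of n] by linarith
    qed
    ultimately have bp: "b \<longlonglongrightarrow> p" by simp
    have a0: "\<forall>n. a n \<in> {0..}" using props by simp
    have b0: "\<forall>n. b n \<in> {0..}" using props by (metis atLeast_iff less_imp_le order.trans)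
    have "\<exists>N. \<forall>n\<ge>N. 0 \<le> a n" using props by blast
    hence p0: "p \<ge> 0" using LIMSEQ_le_const[OF ap] by blast
    have cont: "continuous_on {0..} \<phi>'" by (rule deriv_cont[OF conv deriv])
    have "(\<lambda>n. \<phi>' (a n)) \<longlonglongrightarrow> \<phi>' p"
      by (rule continuous_on_tendsto_compose[OF cont ap]) (use p0 a0 in \<open>simp_all add: always_eventually\<close>)
    moreover have "\<exists>N. \<forall>n\<ge>N. \<phi>' (a n) \<le> - eps" using props by (meson less_imp_le)
    ultimately have c1: "\<phi>' p \<le> - eps" by (rule LIMSEQ_le_const2)
    have "(\<lambda>n. \<phi>' (b n)) \<longlonglongrightarrow> \<phi>' p"
      by (rule continuous_on_tendsto_compose[OF cont bp]) (use p0 b0 in \<open>simp_all add: always_eventually\<close>)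
    moreover have "\<exists>N. \<forall>n\<ge>N. eps \<le> \<phi>' (b n)" using props by (meson less_imp_le)
    ultimately have c2: "\<phi>' p \<ge> eps" by (rule LIMSEQ_le_const)
    show False using c1 c2 eps by simp
  qed
  define n where "n = (LEAST n. ls_stop \<phi>' c rho0 n)"
  have "ls_stop \<phi>' c rho0 n" unfolding n_def by (rule LeastI_ex[OF ex])
  moreover have "\<forall>i<n. \<not> ls_stop \<phi>' c rho0 i" unfolding n_def using not_less_Least by blast
  ultimately show ?thesis by (auto simp: ls_stop_def)
qed

end
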